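(* Let $\mathcal{X}$ be a pospace. Then the trace poset $\overrightarrow{T}\mathcal{X}$ (the set of traces of $\mathcal{X}$ ordered by $f\leq g$ iff $g=u\star f\star v$ for some traces $u,v$), regarded as a category, is isomorphic to the factorization category $F\overrightarrow{P}(\mathcal{X})$ of the trace category of $\mathcal{X}$.
   Context: A pospace is a Hausdorff space $X$ with a partial order closed in $X\times X$, regarded as a directed space whose dipaths are the continuous order-preserving maps $[0,1]\to X$. A trace is a dipath modulo monotone (continuous, endpoint-preserving) reparametrization; $\star$ is concatenation of traces. The trace category $\overrightarrow{P}(\mathcal{X})$ has objects the points of $X$ and morphisms the traces, composed by concatenation. For a category $\mathcal{C}$, the factorization category $F\mathcal{C}$ has objects the morphisms of $\mathcal{C}$, a morphism from $f$ to $f'$ being a pair $(u,v)$ of morphisms of $\mathcal{C}$ with $ufv=f'$, with composition $(u,v)(u',v')=(u'u,vv')$ and identities $(1_x,1_y)$. A poset is viewed as a category with exactly one morphism $a\to b$ iff $a\le b$. *)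

theory Defs
  imports "HOL-Analysis.Analysis"
begin

record ('o, 'm) cat =
  Ob   :: "'o set"
  Ar   :: "'m set"
  Dom  :: "'m \<Rightarrow> 'o"
  Cod  :: "'m \<Rightarrow> 'o"
  Id   :: "'o \<Rightarrow> 'm"
  Comp :: "'m \<Rightarrow> 'm \<Rightarrow> 'm"   \<comment> \<open>Comp g f = g after f, defined when Cod f = Dom g\<close>

definition cat_iso :: "('o, 'm, 'x) cat_scheme \<Rightarrow> ('p, 'n, 'y) cat_scheme \<Rightarrow> bool" where
  "cat_iso C D \<longleftrightarrow> (\<exists>Fo Fa.
     bij_betw Fo (Ob C) (Ob D) \<and> bij_betw Fa (Ar C) (Ar D) \<and>
     (\<forall>f\<in>Ar C. Dom D (Fa f) = Fo (Dom C f) \<and> Cod D (Fa f) = Fo (Cod C f)) \<and>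
     (\<forall>x\<in>Ob C. Fa (Id C x) = Id D (Fo x)) \<and>
     (\<forall>f\<in>Ar C. \<forall>g\<in>Ar C. Cod C f = Dom C g \<longrightarrow> Fa (Comp C g f) = Comp D (Fa g) (Fa f)))"

definition poset_cat :: "'a set \<Rightarrow> ('a \<Rightarrow> 'a \<Rightarrow> bool) \<Rightarrow> ('a, 'a \<times> 'a) cat" where
  "poset_cat A le = \<lparr> Ob = A,
     Ar = {(a, b). a \<in> A \<and> b \<in> A \<and> le a b},
     Dom = fst, Cod = snd, Id = (\<lambda>a. (a, a)),
     Comp = (\<lambda>g f. (fst f, snd g)) \<rparr>"

text \<open>Factorization category: a morphism f \<rightarrow> f' is a pair (u,v) with f' = u \<circ> f \<circ> v;
  it is stored together with its domain f as the triple (f, u, v).\<close>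
definition fact_cat :: "('o, 'm, 'x) cat_scheme \<Rightarrow> ('m, 'm \<times> 'm \<times> 'm) cat" where
  "fact_cat C = \<lparr> Ob = Ar C,
     Ar = {(f, u, v). f \<in> Ar C \<and> u \<in> Ar C \<and> v \<in> Ar C \<and>
                      Dom C u = Cod C f \<and> Cod C v = Dom C f},
     Dom = (\<lambda>(f, u, v). f),
     Cod = (\<lambda>(f, u, v). Comp C u (Comp C f v)),
     Id = (\<lambda>f. (f, Id C (Cod C f), Id C (Dom C f))),
     Comp = (\<lambda>(f', u', v') (f, u, v). (f, Comp C u' u, Comp C v v')) \<rparr>"

definition pospace :: "'a topology \<Rightarrow> ('a \<Rightarrow> 'a \<Rightarrow> bool) \<Rightarrow> bool" where
  "pospace X le \<longleftrightarrow> Hausdorff_space X \<and>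
     (\<forall>x\<in>topspace X. le x x) \<and>
     (\<forall>x\<in>topspace X. \<forall>y\<in>topspace X. le x y \<and> le y x \<longrightarrow> x = y) \<and>
     (\<forall>x\<in>topspace X. \<forall>y\<in>topspace X. \<forall>z\<in>topspace X. le x y \<and> le y z \<longrightarrow> le x z) \<and>
     closedin (prod_topology X X) {(x, y). x \<in> topspace X \<and> y \<in> topspace X \<and> le x y}"

definition dipath :: "'a topology \<Rightarrow> ('a \<Rightarrow> 'a \<Rightarrow> bool) \<Rightarrow> (real \<Rightarrow> 'a) \<Rightarrow> bool" where
  "dipath X le p \<longleftrightarrow> continuous_map (top_of_set {0..1}) X p \<and>
     (\<forall>s t. 0 \<le> s \<and> s \<le> t \<and> t \<le> 1 \<longrightarrow> le (p s) (p t))"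

definition reparam :: "(real \<Rightarrow> real) \<Rightarrow> bool" where
  "reparam \<phi> \<longleftrightarrow> continuous_on {0..1} \<phi> \<and> \<phi> ` {0..1} \<subseteq> {0..1} \<and>
     mono_on {0..1} \<phi> \<and> \<phi> 0 = 0 \<and> \<phi> 1 = 1"

definition reparam_rel :: "'a topology \<Rightarrow> ('a \<Rightarrow> 'a \<Rightarrow> bool) \<Rightarrow> (real \<Rightarrow> 'a) \<Rightarrow> (real \<Rightarrow> 'a) \<Rightarrow> bool" where
  "reparam_rel X le p q \<longleftrightarrow> dipath X le p \<and> dipath X le q \<and>
     (\<exists>\<phi>. reparam \<phi> \<and> (\<forall>t\<in>{0..1}. q t = p (\<phi> t)))"

definition trace_of :: "'a topology \<Rightarrow> ('a \<Rightarrow> 'a \<Rightarrow> bool) \<Rightarrow> (real \<Rightarrow> 'a) \<Rightarrow> (real \<Rightarrow> 'a) set" where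
  "trace_of X le p = {q. equivclp (reparam_rel X le) p q}"

definition traces :: "'a topology \<Rightarrow> ('a \<Rightarrow> 'a \<Rightarrow> bool) \<Rightarrow> (real \<Rightarrow> 'a) set set" where
  "traces X le = {trace_of X le p | p. dipath X le p}"

definition tsrc :: "(real \<Rightarrow> 'a) set \<Rightarrow> 'a" where
  "tsrc T = (SOME p. p \<in> T) 0"

definition ttgt :: "(real \<Rightarrow> 'a) set \<Rightarrow> 'a" where
  "ttgt T = (SOME p. p \<in> T) 1"

text \<open>Concatenation of paths (same formula as joinpaths, which requires a topological type class).\<close>
definition pjoin :: "(real \<Rightarrow> 'a) \<Rightarrow> (real \<Rightarrow> 'a) \<Rightarrow> real \<Rightarrow> 'a" where
  "pjoin p q = (\<lambda>t. if t \<le> 1/2 then p (2 * t) else q (2 * t - 1))"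

definition tcat :: "'a topology \<Rightarrow> ('a \<Rightarrow> 'a \<Rightarrow> bool) \<Rightarrow> (real \<Rightarrow> 'a) set \<Rightarrow> (real \<Rightarrow> 'a) set \<Rightarrow> (real \<Rightarrow> 'a) set" where
  "tcat X le A B = {r. \<exists>p\<in>A. \<exists>q\<in>B. equivclp (reparam_rel X le) (pjoin p q) r}"

definition trace_cat :: "'a topology \<Rightarrow> ('a \<Rightarrow> 'a \<Rightarrow> bool) \<Rightarrow> ('a, (real \<Rightarrow> 'a) set) cat" where
  "trace_cat X le = \<lparr> Ob = topspace X, Ar = traces X le,
     Dom = tsrc, Cod = ttgt,
     Id = (\<lambda>x. trace_of X le (\<lambda>t. x)),
     Comp = (\<lambda>g f. tcat X le f g) \<rparr>"

definition trace_le :: "'a topology \<Rightarrow> ('a \<Rightarrow> 'a \<Rightarrow> bool) \<Rightarrow> (real \<Rightarrow> 'a) set \<Rightarrow> (real \<Rightarrow> 'a) set \<Rightarrow> bool" where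
  "trace_le X le f g \<longleftrightarrow> (\<exists>u\<in>traces X le. \<exists>v\<in>traces X le.
     ttgt u = tsrc f \<and> ttgt f = tsrc v \<and> g = tcat X le (tcat X le u f) v)"

end

theory Submission
  imports Defs
begin


abbreviation EQ where "EQ X le \<equiv> equivclp (reparam_rel X le)"

lemma dipath_in: "dipath X le p \<Longrightarrow> t \<in> {0..1} \<Longrightarrow> p t \<in> topspace X"
  unfolding dipath_def continuous_map_def by auto

lemma dipath_le: "dipath X le p \<Longrightarrow> 0 \<le> s \<Longrightarrow> s \<le> t \<Longrightarrow> t \<le> 1 \<Longrightarrow> le (p s) (p t)"
  unfolding dipath_def by auto

lemma pos_refl: "pospace X le \<Longrightarrow> x \<in> topspace X \<Longrightarrow> le x x"
proof -
  assume a: "pospace X le" "x \<in> topspace X"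
  have "\<forall>x\<in>topspace X. le x x" using a(1) unfolding pospace_def by (elim conjE) assumption
  then show ?thesis using a(2) by blast
qed

lemma pos_antisym: "pospace X le \<Longrightarrow> x \<in> topspace X \<Longrightarrow> y \<in> topspace X \<Longrightarrow> le x y \<Longrightarrow> le y x \<Longrightarrow> x = y"
proof -
  assume a: "pospace X le" "x \<in> topspace X" "y \<in> topspace X" "le x y" "le y x"
  have "\<forall>x\<in>topspace X. \<forall>y\<in>topspace X. le x y \<and> le y x \<longrightarrow> x = y"
    using a(1) unfolding pospace_def by (elim conjE) assumption
  then show ?thesis using a(2-) by blast
qed

lemma pos_trans: "pospace X le \<Longrightarrow> x \<in> topspace X \<Longrightarrow> y \<in> topspace X \<Longrightarrow> z \<in> topspace X
   \<Longrightarrow> le x y \<Longrightarrow> le y z \<Longrightarrow> le x z"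
proof -
  assume a: "pospace X le" "x \<in> topspace X" "y \<in> topspace X" "z \<in> topspace X" "le x y" "le y z"
  have "\<forall>x\<in>topspace X. \<forall>y\<in>topspace X. \<forall>z\<in>topspace X. le x y \<and> le y z \<longrightarrow> le x z"
    using a(1) unfolding pospace_def by (elim conjE) assumption
  then show ?thesis using a(2-) by blast
qed

lemma pos_closed: "pospace X le \<Longrightarrow> closedin (prod_topology X X) {(x, y). x \<in> topspace X \<and> y \<in> topspace X \<and> le x y}"
  unfolding pospace_def by (elim conjE) assumption

lemma cm_comp_real:
  assumes "continuous_map (top_of_set {0..1}) X p" "continuous_on S \<phi>" "\<phi> ` S \<subseteq> {0..1}"
  shows "continuous_map (top_of_set S) X (\<lambda>t. p (\<phi> t))"
proof -
  have c: "continuous_map (top_of_set S) (top_of_set {0..1}) \<phi>"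
    using assms(2,3) by auto
  show ?thesis using continuous_map_compose[OF c assms(1)] by (simp add: o_def)
qed

lemma dipath_comp:
  assumes "dipath X le p" "continuous_on {0..1} \<phi>" "\<phi> ` {0..1} \<subseteq> {0..1}" "mono_on {0..1} \<phi>"
    and "\<And>t. t \<in> {0..1} \<Longrightarrow> q t = p (\<phi> t)"
  shows "dipath X le q"
proof -
  have "continuous_map (top_of_set {0..1}) X (\<lambda>t. p (\<phi> t))"
    using cm_comp_real assms(1,2,3) unfolding dipath_def by blast
  then have "continuous_map (top_of_set {0..1}) X q"
    by (rule continuous_map_eq) (simp add: assms(5))
  moreover have "le (q s) (q t)" if "0 \<le> s" "s \<le> t" "t \<le> 1" for s t
  proof -
    have "\<phi> s \<le> \<phi> t" using assms(4) that by (auto simp: mono_on_def)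
    moreover have "0 \<le> \<phi> s" "\<phi> t \<le> 1" using assms(3) that by (auto simp: image_subset_iff)
    ultimately have "le (p (\<phi> s)) (p (\<phi> t))" by (intro dipath_le[OF assms(1)])
    moreover have "q s = p (\<phi> s)" "q t = p (\<phi> t)" using assms(5) that by auto
    ultimately show ?thesis by simp
  qed
  ultimately show ?thesis unfolding dipath_def by blast
qed

lemma rr_intro:
  assumes "dipath X le p" "reparam \<phi>" "\<And>t. t \<in> {0..1} \<Longrightarrow> q t = p (\<phi> t)"
  shows "reparam_rel X le p q"
proof -
  have r: "continuous_on {0..1} \<phi>" "\<phi> ` {0..1} \<subseteq> {0..1}" "mono_on {0..1} \<phi>"
    using assms(2) unfolding reparam_def by auto
  have "dipath X le q" by (rule dipath_comp[OF assms(1) r assms(3)])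
  then show ?thesis unfolding reparam_rel_def using assms by blast
qed

lemma reparam_id: "reparam (\<lambda>t. t)"
  unfolding reparam_def by (auto simp: mono_on_def)

lemma EQ_cong:
  assumes "dipath X le p" "\<And>t. t \<in> {0..1} \<Longrightarrow> q t = p t"
  shows "EQ X le p q"
proof -
  have "reparam_rel X le p q" by (rule rr_intro[OF assms(1) reparam_id]) (simp add: assms(2))
  then show ?thesis by blast
qed

lemma rr_props: "reparam_rel X le p q \<Longrightarrow> dipath X le p \<and> dipath X le q \<and> q 0 = p 0 \<and> q 1 = p 1"
proof -
  assume "reparam_rel X le p q"
  then obtain \<phi> where a: "dipath X le p" "dipath X le q" "reparam \<phi>" "\<forall>t\<in>{0..1}. q t = p (\<phi> t)"
    unfolding reparam_rel_def by blast
  have "\<phi> 0 = 0" "\<phi> 1 = 1" using a(3) unfolding reparam_def by auto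
  moreover have "q 0 = p (\<phi> 0)" "q 1 = p (\<phi> 1)" using a(4) by auto
  ultimately show ?thesis using a by simp
qed

lemma eq_props: "EQ X le p q \<Longrightarrow> dipath X le p \<Longrightarrow> dipath X le q \<and> q 0 = p 0 \<and> q 1 = p 1"
  by (induction rule: equivclp_induct) (auto dest: rr_props)

lemma in_trace: "q \<in> trace_of X le p \<longleftrightarrow> EQ X le p q"
  by (simp add: trace_of_def)

lemma trace_of_eq: "trace_of X le p = trace_of X le q \<longleftrightarrow> EQ X le p q"
proof
  assume "trace_of X le p = trace_of X le q"
  then have "q \<in> trace_of X le p" by (simp add: trace_of_def)
  then show "EQ X le p q" by (simp add: trace_of_def)
next
  assume a: "EQ X le p q"
  show "trace_of X le p = trace_of X le q"
  proof (intro set_eqI iffI)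
    fix r assume "r \<in> trace_of X le p"
    then show "r \<in> trace_of X le q" using a unfolding trace_of_def by (blast intro: equivclp_trans equivclp_sym)
  next
    fix r assume "r \<in> trace_of X le q"
    then show "r \<in> trace_of X le p" using a unfolding trace_of_def by (blast intro: equivclp_trans equivclp_sym)
  qed
qed

lemma tsrc_trace: "dipath X le p \<Longrightarrow> tsrc (trace_of X le p) = p 0"
  unfolding tsrc_def
proof -
  assume d: "dipath X le p"
  have "p \<in> trace_of X le p" by (simp add: trace_of_def)
  then have "(SOME q. q \<in> trace_of X le p) \<in> trace_of X le p" using someI[of "\<lambda>q. q \<in> trace_of X le p" p] by simp
  then have "EQ X le p (SOME q. q \<in> trace_of X le p)" by (simp add: trace_of_def)
  from eq_props[OF this d] show "(SOME q. q \<in> trace_of X le p) 0 = p 0" by simp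
qed

lemma ttgt_trace: "dipath X le p \<Longrightarrow> ttgt (trace_of X le p) = p 1"
  unfolding ttgt_def
proof -
  assume d: "dipath X le p"
  have "p \<in> trace_of X le p" by (simp add: trace_of_def)
  then have "(SOME q. q \<in> trace_of X le p) \<in> trace_of X le p" using someI[of "\<lambda>q. q \<in> trace_of X le p" p] by simp
  then have "EQ X le p (SOME q. q \<in> trace_of X le p)" by (simp add: trace_of_def)
  from eq_props[OF this d] show "(SOME q. q \<in> trace_of X le p) 1 = p 1" by simp
qed

lemma pjoin_dipath:
  assumes pos: "pospace X le" and p: "dipath X le p" and q: "dipath X le q" and e: "p 1 = q 0"
  shows "dipath X le (pjoin p q)"
proof -
  have cp: "continuous_map (top_of_set {0..1}) X p" and cq: "continuous_map (top_of_set {0..1}) X q"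
    using p q unfolding dipath_def by auto
  have "continuous_map (top_of_set {0..1}) X (pjoin p q)"
    unfolding pjoin_def
  proof (rule continuous_map_cases_le)
    show "continuous_map (top_of_set {0..1}) euclideanreal (\<lambda>x. x)" by simp
    show "continuous_map (top_of_set {0..1}) euclideanreal (\<lambda>x. 1/2)" by simp
    have "continuous_map (top_of_set ({0..1} \<inter> {x. x \<in> {0..1} \<and> x \<le> 1/2})) X (\<lambda>t. p (2 * t))"
      by (rule cm_comp_real[OF cp]) (auto intro!: continuous_intros)
    then show "continuous_map (subtopology (top_of_set {0..1}) {x \<in> topspace (top_of_set {0..1}). x \<le> 1/2}) X (\<lambda>t. p (2 * t))"
      by (simp add: subtopology_subtopology)
    have "continuous_map (top_of_set ({0..1} \<inter> {x. x \<in> {0..1} \<and> 1/2 \<le> x})) X (\<lambda>t. q (2 * t - 1))"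
      by (rule cm_comp_real[OF cq]) (auto intro!: continuous_intros)
    then show "continuous_map (subtopology (top_of_set {0..1}) {x \<in> topspace (top_of_set {0..1}). 1/2 \<le> x}) X (\<lambda>t. q (2 * t - 1))"
      by (simp add: subtopology_subtopology)
    show "p (2 * x) = q (2 * x - 1)" if "x \<in> topspace (top_of_set {0..1})" "x = 1/2" for x
    proof -
      have "2*x = 1" "2*x-1 = 0" using that(2) by simp_all
      then show ?thesis using e by simp
    qed
  qed
  moreover have "le (pjoin p q s) (pjoin p q t)" if "0 \<le> s" "s \<le> t" "t \<le> 1" for s t
  proof (cases "t \<le> 1/2")
    case True
    have "le (p (2* s)) (p (2*t))" by (rule dipath_le[OF p]) (use that True in auto)
    then show ?thesis using True that by (simp add: pjoin_def)
  next
    case False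
    note F = False
    show ?thesis
    proof (cases "s \<le> 1/2")
      case True
      have h1: "le (p (2* s)) (p 1)" by (rule dipath_le[OF p]) (use True that in auto)
      have h2: "le (p 1) (q (2*t-1))" unfolding e by (rule dipath_le[OF q]) (use F that in auto)
      have h3: "p (2* s) \<in> topspace X" "p 1 \<in> topspace X" "q (2*t-1) \<in> topspace X"
        using dipath_in[OF p] dipath_in[OF q] True F that by auto
      have "le (p (2* s)) (q (2*t-1))" by (rule pos_trans[OF pos h3 h1 h2])
      then show ?thesis using True F by (simp add: pjoin_def)
    next
      case False
      have "le (q (2* s-1)) (q (2*t-1))" by (rule dipath_le[OF q]) (use False F that in auto)
      then show ?thesis using False F that by (simp add: pjoin_def)
    qed
  qed
  ultimately show ?thesis unfolding dipath_def by blast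
qed



lemma reparamI:
  assumes "continuous_on {0..1} \<phi>" "\<And>t. 0 \<le> t \<Longrightarrow> t \<le> 1 \<Longrightarrow> 0 \<le> \<phi> t \<and> \<phi> t \<le> 1"
    "\<And>s t. 0 \<le> s \<Longrightarrow> s \<le> t \<Longrightarrow> t \<le> 1 \<Longrightarrow> \<phi> s \<le> \<phi> t" "\<phi> 0 = 0" "\<phi> 1 = 1"
  shows "reparam \<phi>"
proof -
  have "\<phi> ` {0..1} \<subseteq> {0..1}" using assms(2) by (auto simp: image_subset_iff)
  moreover have "mono_on {0..1} \<phi>" unfolding mono_on_def using assms(3) by auto
  ultimately show ?thesis unfolding reparam_def using assms(1,4,5) by blast
qed

lemma reparamD:
  assumes "reparam \<phi>"
  shows "continuous_on {0..1} \<phi>" "\<And>t. 0 \<le> t \<Longrightarrow> t \<le> 1 \<Longrightarrow> 0 \<le> \<phi> t"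
    "\<And>t. 0 \<le> t \<Longrightarrow> t \<le> 1 \<Longrightarrow> \<phi> t \<le> 1"
    "\<And>s t. 0 \<le> s \<Longrightarrow> s \<le> t \<Longrightarrow> t \<le> 1 \<Longrightarrow> \<phi> s \<le> \<phi> t" "\<phi> 0 = 0" "\<phi> 1 = 1"
proof -
  have a: "continuous_on {0..1} \<phi>" "\<phi> ` {0..1} \<subseteq> {0..1}" "mono_on {0..1} \<phi>" "\<phi> 0 = 0" "\<phi> 1 = 1"
    using assms unfolding reparam_def by auto
  show "continuous_on {0..1} \<phi>" "\<phi> 0 = 0" "\<phi> 1 = 1" using a by auto
  show "\<And>t. 0 \<le> t \<Longrightarrow> t \<le> 1 \<Longrightarrow> 0 \<le> \<phi> t" "\<And>t. 0 \<le> t \<Longrightarrow> t \<le> 1 \<Longrightarrow> \<phi> t \<le> 1"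
    using a(2) by (auto simp: image_subset_iff)
  show "\<And>s t. 0 \<le> s \<Longrightarrow> s \<le> t \<Longrightarrow> t \<le> 1 \<Longrightarrow> \<phi> s \<le> \<phi> t"
    using a(3) unfolding mono_on_def by auto
qed

lemma rr_get:
  assumes "reparam_rel X le p q"
  obtains \<phi> where "dipath X le p" "dipath X le q" "reparam \<phi>" "\<And>t. t \<in> {0..1} \<Longrightarrow> q t = p (\<phi> t)"
  using assms unfolding reparam_rel_def by blast

lemma pjoin_rr_left:
  assumes pos: "pospace X le" and r: "reparam_rel X le p p'" and q: "dipath X le q" and e: "p 1 = q 0"
  shows "reparam_rel X le (pjoin p q) (pjoin p' q)"
proof -
  obtain \<phi> where p: "dipath X le p" and "dipath X le p'" and rp: "reparam \<phi>" and eq: "\<And>t. t \<in> {0..1} \<Longrightarrow> p' t = p (\<phi> t)"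
    by (rule rr_get[OF r]) blast
  define \<psi> where "\<psi> t = \<phi> (min (2*t) 1) / 2 + max 0 (t - 1/2)" for t
  have c1: "continuous_on {0..1} (\<lambda>t. \<phi> (min (2*t) 1))"
    by (rule continuous_on_compose2[OF reparamD(1)[OF rp]]) (auto intro!: continuous_intros)
  have "reparam \<psi>"
  proof (rule reparamI)
    show "continuous_on {0..1} \<psi>" unfolding \<psi>_def by (intro continuous_intros c1) auto
    show "0 \<le> \<psi> t \<and> \<psi> t \<le> 1" if "0 \<le> t" "t \<le> 1" for t
    proof -
      have "0 \<le> \<phi> (min (2*t) 1)" "\<phi> (min (2*t) 1) \<le> 1" using reparamD(2,3)[OF rp] that by auto
      then show ?thesis unfolding \<psi>_def using that by auto
    qed
    show "\<psi> s \<le> \<psi> t" if "0 \<le> s" "s \<le> t" "t \<le> 1" for s t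
    proof -
      have "\<phi> (min (2* s) 1) \<le> \<phi> (min (2*t) 1)" using reparamD(4)[OF rp] that by auto
      then show ?thesis unfolding \<psi>_def using that by auto
    qed
    show "\<psi> 0 = 0" "\<psi> 1 = 1" unfolding \<psi>_def using reparamD(5,6)[OF rp] by auto
  qed
  show ?thesis
  proof (rule rr_intro[OF pjoin_dipath[OF pos p q e] \<open>reparam \<psi>\<close>])
    fix t :: real assume t: "t \<in> {0..1}"
    show "pjoin p' q t = pjoin p q (\<psi> t)"
    proof (cases "t \<le> 1/2")
      case True
      have m: "min (2*t) 1 = 2*t" using True by simp
      have b: "0 \<le> \<phi> (2*t)" "\<phi> (2*t) \<le> 1" using reparamD(2,3)[OF rp] True t by auto
      have "\<psi> t = \<phi> (2*t) / 2" unfolding \<psi>_def using True m by simp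
      then have h: "2 * \<psi> t = \<phi> (2*t)" "\<psi> t \<le> 1/2" using b by auto
      show ?thesis using True h eq[of "2*t"] t by (simp add: pjoin_def)
    next
      case False
      have "\<psi> t = t" unfolding \<psi>_def using False reparamD(6)[OF rp] by simp
      then show ?thesis using False by (simp add: pjoin_def)
    qed
  qed
qed

lemma pjoin_rr_right:
  assumes pos: "pospace X le" and r: "reparam_rel X le q q'" and p: "dipath X le p" and e: "p 1 = q 0"
  shows "reparam_rel X le (pjoin p q) (pjoin p q')"
proof -
  obtain \<phi> where q: "dipath X le q" and "dipath X le q'" and rp: "reparam \<phi>" and eq: "\<And>t. t \<in> {0..1} \<Longrightarrow> q' t = q (\<phi> t)"
    by (rule rr_get[OF r]) blast
  define \<psi> where "\<psi> t = min t (1/2) + \<phi> (max (2*t - 1) 0) / 2" for t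
  have c1: "continuous_on {0..1} (\<lambda>t. \<phi> (max (2*t - 1) 0))"
    by (rule continuous_on_compose2[OF reparamD(1)[OF rp]]) (auto intro!: continuous_intros)
  have "reparam \<psi>"
  proof (rule reparamI)
    show "continuous_on {0..1} \<psi>" unfolding \<psi>_def by (intro continuous_intros c1) auto
    show "0 \<le> \<psi> t \<and> \<psi> t \<le> 1" if "0 \<le> t" "t \<le> 1" for t
    proof -
      have "0 \<le> \<phi> (max (2*t - 1) 0)" "\<phi> (max (2*t - 1) 0) \<le> 1" using reparamD(2,3)[OF rp] that by auto
      then show ?thesis unfolding \<psi>_def using that by auto
    qed
    show "\<psi> s \<le> \<psi> t" if "0 \<le> s" "s \<le> t" "t \<le> 1" for s t
    proof -
      have "\<phi> (max (2* s - 1) 0) \<le> \<phi> (max (2*t - 1) 0)" using reparamD(4)[OF rp] that by auto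
      then show ?thesis unfolding \<psi>_def using that by auto
    qed
    show "\<psi> 0 = 0" "\<psi> 1 = 1" unfolding \<psi>_def using reparamD(5,6)[OF rp] by auto
  qed
  show ?thesis
  proof (rule rr_intro[OF pjoin_dipath[OF pos p q e] \<open>reparam \<psi>\<close>])
    fix t :: real assume t: "t \<in> {0..1}"
    show "pjoin p q' t = pjoin p q (\<psi> t)"
    proof (cases "t \<le> 1/2")
      case True
      have "\<psi> t = t" unfolding \<psi>_def using True reparamD(5)[OF rp] by simp
      then show ?thesis using True by (simp add: pjoin_def)
    next
      case False
      have m: "max (2*t - 1) 0 = 2*t - 1" using False by simp
      have b: "0 \<le> \<phi> (2*t - 1)" "\<phi> (2*t - 1) \<le> 1" using reparamD(2,3)[OF rp] False t by auto
      have ps: "\<psi> t = 1/2 + \<phi> (2*t - 1) / 2" unfolding \<psi>_def using False m by simp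
      have l: "pjoin p q' t = q (\<phi> (2*t - 1))" using False eq[of "2*t - 1"] t by (simp add: pjoin_def)
      show ?thesis
      proof (cases "\<phi> (2*t - 1) = 0")
        case True
        then have h: "2 * \<psi> t = 1" "\<psi> t \<le> 1/2" using ps by auto
        have "pjoin p q (\<psi> t) = p 1" using h by (simp add: pjoin_def)
        then show ?thesis using l True e by simp
      next
        case False
        then have "\<psi> t > 1/2" using ps b by simp
        then show ?thesis using l ps by (simp add: pjoin_def)
      qed
    qed
  qed
qed



lemma pjoin_EQ_left:
  assumes pos: "pospace X le" and E: "EQ X le p p'" and p: "dipath X le p" and q: "dipath X le q" and e: "p 1 = q 0"
  shows "EQ X le (pjoin p q) (pjoin p' q)"
  using E
proof (induction rule: equivclp_induct)
  case base
  then show ?case by simp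
next
  case (step y z)
  have y: "dipath X le y" "y 1 = p 1" using eq_props[OF step(1) p] by auto
  from step(2) show ?case
  proof
    assume r: "reparam_rel X le y z"
    have "reparam_rel X le (pjoin y q) (pjoin z q)" by (rule pjoin_rr_left[OF pos r q]) (simp add: y e)
    then show ?case using step(3) by (blast intro: equivclp_into_equivclp)
  next
    assume r: "reparam_rel X le z y"
    have "z 1 = y 1" using rr_props[OF r] by simp
    then have "reparam_rel X le (pjoin z q) (pjoin y q)" by (intro pjoin_rr_left[OF pos r q]) (simp add: y e)
    then show ?case using step(3) by (blast intro: equivclp_into_equivclp)
  qed
qed

lemma pjoin_EQ_right:
  assumes pos: "pospace X le" and E: "EQ X le q q'" and p: "dipath X le p" and q: "dipath X le q" and e: "p 1 = q 0"
  shows "EQ X le (pjoin p q) (pjoin p q')"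
  using E
proof (induction rule: equivclp_induct)
  case base
  then show ?case by simp
next
  case (step y z)
  have y: "dipath X le y" "y 0 = q 0" using eq_props[OF step(1) q] by auto
  from step(2) show ?case
  proof
    assume r: "reparam_rel X le y z"
    have "reparam_rel X le (pjoin p y) (pjoin p z)" by (rule pjoin_rr_right[OF pos r p]) (simp add: y e)
    then show ?case using step(3) by (blast intro: equivclp_into_equivclp)
  next
    assume r: "reparam_rel X le z y"
    have "z 0 = y 0" using rr_props[OF r] by simp
    then have "reparam_rel X le (pjoin p z) (pjoin p y)" by (intro pjoin_rr_right[OF pos r p]) (simp add: y e)
    then show ?case using step(3) by (blast intro: equivclp_into_equivclp)
  qed
qed

lemma tcat_trace:
  assumes pos: "pospace X le" and p: "dipath X le p" and q: "dipath X le q" and e: "p 1 = q 0"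
  shows "tcat X le (trace_of X le p) (trace_of X le q) = trace_of X le (pjoin p q)"
proof (intro set_eqI iffI)
  fix r assume "r \<in> tcat X le (trace_of X le p) (trace_of X le q)"
  then obtain p' q' where pp: "EQ X le p p'" and qq: "EQ X le q q'" and rr: "EQ X le (pjoin p' q') r"
    unfolding tcat_def trace_of_def by blast
  have p': "dipath X le p'" "p' 1 = p 1" using eq_props[OF pp p] by auto
  have "EQ X le (pjoin p q) (pjoin p' q)" by (rule pjoin_EQ_left[OF pos pp p q e])
  moreover have "EQ X le (pjoin p' q) (pjoin p' q')" by (rule pjoin_EQ_right[OF pos qq p'(1) q]) (simp add: p' e)
  ultimately have "EQ X le (pjoin p q) r" using rr by (blast intro: equivclp_trans)
  then show "r \<in> trace_of X le (pjoin p q)" by (simp add: trace_of_def)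
next
  fix r assume "r \<in> trace_of X le (pjoin p q)"
  then have "EQ X le (pjoin p q) r" by (simp add: trace_of_def)
  moreover have "p \<in> trace_of X le p" "q \<in> trace_of X le q" by (simp_all add: trace_of_def)
  ultimately show "r \<in> tcat X le (trace_of X le p) (trace_of X le q)"
    unfolding tcat_def by blast
qed

lemma pjoin_assoc:
  assumes pos: "pospace X le" and a: "dipath X le a" and b: "dipath X le b" and c: "dipath X le c"
    and e1: "a 1 = b 0" and e2: "b 1 = c 0"
  shows "EQ X le (pjoin (pjoin a b) c) (pjoin a (pjoin b c))"
proof -
  have ab: "dipath X le (pjoin a b)" by (rule pjoin_dipath[OF pos a b e1])
  have ab1: "pjoin a b 1 = c 0" using e2 by (simp add: pjoin_def)
  define \<phi> where "\<phi> t = max (t/2) (max (t - 1/4) (2*t - 1))" for t :: real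
  have "reparam \<phi>"
  proof (rule reparamI)
    show "continuous_on {0..1} \<phi>" unfolding \<phi>_def by (intro continuous_intros) auto
    show "0 \<le> \<phi> t \<and> \<phi> t \<le> 1" if "0 \<le> t" "t \<le> 1" for t
      unfolding \<phi>_def using that by (auto simp: max_def)
    show "\<phi> s \<le> \<phi> t" if "0 \<le> s" "s \<le> t" "t \<le> 1" for s t
      unfolding \<phi>_def using that by (auto simp: max_def)
    show "\<phi> 0 = 0" "\<phi> 1 = 1" unfolding \<phi>_def by auto
  qed
  have "reparam_rel X le (pjoin (pjoin a b) c) (pjoin a (pjoin b c))"
  proof (rule rr_intro[OF pjoin_dipath[OF pos ab c ab1] \<open>reparam \<phi>\<close>])
    fix t :: real assume t: "t \<in> {0..1}"
    consider "t \<le> 1/2" | "1/2 < t" "t \<le> 3/4" | "3/4 < t" by linarith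
    then show "pjoin a (pjoin b c) t = pjoin (pjoin a b) c (\<phi> t)"
    proof cases
      case 1
      then have e: "\<phi> t = t/2" unfolding \<phi>_def by auto
      show ?thesis unfolding e using 1 by (simp add: pjoin_def)
    next
      case 2
      then have e: "\<phi> t = t - 1/4" unfolding \<phi>_def by auto
      have "2 * (2 * (t - 1/4)) - 1 = 2 * (2 * t - 1)" by (simp add: algebra_simps)
      then show ?thesis unfolding e using 2 by (simp add: pjoin_def)
    next
      case 3
      then have e: "\<phi> t = 2*t - 1" unfolding \<phi>_def by auto
      show ?thesis unfolding e using 3 by (simp add: pjoin_def)
    qed
  qed
  then show ?thesis by blast
qed

lemma const_dipath:
  assumes pos: "pospace X le" and x: "x \<in> topspace X"
  shows "dipath X le (\<lambda>t. x)"
  unfolding dipath_def using x pos_refl[OF pos x] by (simp add: continuous_map_const)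

lemma pjoin_const_left:
  assumes pos: "pospace X le" and p: "dipath X le p"
  shows "EQ X le p (pjoin (\<lambda>t. p 0) p)"
proof -
  define \<phi> where "\<phi> t = max 0 (2*t - 1)" for t :: real
  have "reparam \<phi>"
  proof (rule reparamI)
    show "continuous_on {0..1} \<phi>" unfolding \<phi>_def by (intro continuous_intros)
    show "0 \<le> \<phi> t \<and> \<phi> t \<le> 1" if "0 \<le> t" "t \<le> 1" for t
      unfolding \<phi>_def using that by auto
    show "\<phi> s \<le> \<phi> t" if "0 \<le> s" "s \<le> t" "t \<le> 1" for s t
      unfolding \<phi>_def using that by auto
    show "\<phi> 0 = 0" "\<phi> 1 = 1" unfolding \<phi>_def by auto
  qed
  have "reparam_rel X le p (pjoin (\<lambda>t. p 0) p)"
  proof (rule rr_intro[OF p \<open>reparam \<phi>\<close>])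
    fix t :: real assume t: "t \<in> {0..1}"
    show "pjoin (\<lambda>t. p 0) p t = p (\<phi> t)"
    proof (cases "t \<le> 1/2")
      case True
      then have "\<phi> t = 0" unfolding \<phi>_def by auto
      then show ?thesis using True by (simp add: pjoin_def)
    next
      case False
      then have "\<phi> t = 2*t - 1" unfolding \<phi>_def by auto
      then show ?thesis using False by (simp add: pjoin_def)
    qed
  qed
  then show ?thesis by blast
qed

lemma pjoin_const_right:
  assumes pos: "pospace X le" and p: "dipath X le p"
  shows "EQ X le p (pjoin p (\<lambda>t. p 1))"
proof -
  define \<phi> where "\<phi> t = min 1 (2*t)" for t :: real
  have "reparam \<phi>"
  proof (rule reparamI)
    show "continuous_on {0..1} \<phi>" unfolding \<phi>_def by (intro continuous_intros)
    show "0 \<le> \<phi> t \<and> \<phi> t \<le> 1" if "0 \<le> t" "t \<le> 1" for t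
      unfolding \<phi>_def using that by auto
    show "\<phi> s \<le> \<phi> t" if "0 \<le> s" "s \<le> t" "t \<le> 1" for s t
      unfolding \<phi>_def using that by auto
    show "\<phi> 0 = 0" "\<phi> 1 = 1" unfolding \<phi>_def by auto
  qed
  have "reparam_rel X le p (pjoin p (\<lambda>t. p 1))"
  proof (rule rr_intro[OF p \<open>reparam \<phi>\<close>])
    fix t :: real assume t: "t \<in> {0..1}"
    show "pjoin p (\<lambda>t. p 1) t = p (\<phi> t)"
    proof (cases "t \<le> 1/2")
      case True
      then have "\<phi> t = 2*t" unfolding \<phi>_def by auto
      then show ?thesis using True by (simp add: pjoin_def)
    next
      case False
      then have "\<phi> t = 1" unfolding \<phi>_def by auto
      then show ?thesis using False by (simp add: pjoin_def)
    qed
  qed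
  then show ?thesis by blast
qed



definition bp :: "('a \<Rightarrow> 'a \<Rightarrow> bool) \<Rightarrow> (real \<Rightarrow> 'a) \<Rightarrow> 'a \<Rightarrow> real" where
  "bp le P a = Sup {t \<in> {0..1}. le (P t) a}"

definition ap :: "('a \<Rightarrow> 'a \<Rightarrow> bool) \<Rightarrow> (real \<Rightarrow> 'a) \<Rightarrow> 'a \<Rightarrow> real" where
  "ap le P c = Inf {t \<in> {0..1}. le c (P t)}"

definition initp :: "('a \<Rightarrow> 'a \<Rightarrow> bool) \<Rightarrow> (real \<Rightarrow> 'a) \<Rightarrow> 'a \<Rightarrow> real \<Rightarrow> 'a" where
  "initp le P a = (\<lambda>t. P (t * bp le P a))"

definition finp :: "('a \<Rightarrow> 'a \<Rightarrow> bool) \<Rightarrow> (real \<Rightarrow> 'a) \<Rightarrow> 'a \<Rightarrow> real \<Rightarrow> 'a" where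
  "finp le P c = (\<lambda>t. P (ap le P c + t * (1 - ap le P c)))"

lemma closed_le_set:
  assumes pos: "pospace X le" and P: "dipath X le P" and a: "a \<in> topspace X"
  shows "closed {t \<in> {0..1}. le (P t) a}" "closed {t \<in> {0..1}. le a (P t)}"
proof -
  let ?G = "{(x, y). x \<in> topspace X \<and> y \<in> topspace X \<and> le x y}"
  have G: "closedin (prod_topology X X) ?G" by (rule pos_closed[OF pos])
  have cP: "continuous_map (top_of_set {0..1}) X P" using P unfolding dipath_def by blast
  have ca: "continuous_map (top_of_set {0..1}) X (\<lambda>t. a)" using a by (simp add: continuous_map_const)
  have m1: "continuous_map (top_of_set {0..1}) (prod_topology X X) (\<lambda>t. (P t, a))"
    by (intro continuous_map_pairedI cP ca)
  have m2: "continuous_map (top_of_set {0..1}) (prod_topology X X) (\<lambda>t. (a, P t))"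
    by (intro continuous_map_pairedI cP ca)
  have e1: "{t \<in> topspace (top_of_set {0..1}). (P t, a) \<in> ?G} = {t \<in> {0..1}. le (P t) a}"
    using dipath_in[OF P] a by auto
  have e2: "{t \<in> topspace (top_of_set {0..1}). (a, P t) \<in> ?G} = {t \<in> {0..1}. le a (P t)}"
    using dipath_in[OF P] a by auto
  have "closedin (top_of_set {0..1}) {t \<in> {0..1}. le (P t) a}"
    using closedin_continuous_map_preimage[OF m1 G] unfolding e1 .
  then show "closed {t \<in> {0..1}. le (P t) a}" by (rule closedin_closed_trans) simp
  have "closedin (top_of_set {0..1}) {t \<in> {0..1}. le a (P t)}"
    using closedin_continuous_map_preimage[OF m2 G] unfolding e2 .
  then show "closed {t \<in> {0..1}. le a (P t)}" by (rule closedin_closed_trans) simp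
qed

lemma bp_props:
  assumes pos: "pospace X le" and P: "dipath X le P" and a: "a \<in> topspace X" and a0: "le (P 0) a"
  shows "0 \<le> bp le P a" "bp le P a \<le> 1" "le (P (bp le P a)) a"
    "\<And>t. 0 \<le> t \<Longrightarrow> t \<le> 1 \<Longrightarrow> le (P t) a \<longleftrightarrow> t \<le> bp le P a"
proof -
  let ?S = "{t \<in> {0..1}. le (P t) a}"
  have ne: "?S \<noteq> {}" using a0 by force
  have bd: "bdd_above ?S" by (rule bdd_aboveI[where M=1]) auto
  have "Sup ?S \<in> ?S" by (rule closed_contains_Sup[OF ne bd closed_le_set(1)[OF pos P a]])
  then show b1: "0 \<le> bp le P a" "bp le P a \<le> 1" "le (P (bp le P a)) a" unfolding bp_def by auto
  fix t :: real assume t: "0 \<le> t" "t \<le> 1"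
  show "le (P t) a \<longleftrightarrow> t \<le> bp le P a"
  proof
    assume "le (P t) a"
    then have "t \<in> ?S" using t by auto
    then show "t \<le> bp le P a" unfolding bp_def by (rule cSup_upper[OF _ bd])
  next
    assume tb: "t \<le> bp le P a"
    have "le (P t) (P (bp le P a))" by (rule dipath_le[OF P t(1) tb b1(2)])
    moreover have "P t \<in> topspace X" "P (bp le P a) \<in> topspace X" using dipath_in[OF P] t b1 by auto
    ultimately show "le (P t) a" using pos_trans[OF pos _ _ a _ b1(3)] by blast
  qed
qed

lemma ap_props:
  assumes pos: "pospace X le" and P: "dipath X le P" and c: "c \<in> topspace X" and c1: "le c (P 1)"
  shows "0 \<le> ap le P c" "ap le P c \<le> 1" "le c (P (ap le P c))"
    "\<And>t. 0 \<le> t \<Longrightarrow> t \<le> 1 \<Longrightarrow> le c (P t) \<longleftrightarrow> ap le P c \<le> t"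
proof -
  let ?S = "{t \<in> {0..1}. le c (P t)}"
  have ne: "?S \<noteq> {}" using c1 by force
  have bd: "bdd_below ?S" by (rule bdd_belowI[where m=0]) auto
  have "Inf ?S \<in> ?S" by (rule closed_contains_Inf[OF ne bd closed_le_set(2)[OF pos P c]])
  then show b1: "0 \<le> ap le P c" "ap le P c \<le> 1" "le c (P (ap le P c))" unfolding ap_def by auto
  fix t :: real assume t: "0 \<le> t" "t \<le> 1"
  show "le c (P t) \<longleftrightarrow> ap le P c \<le> t"
  proof
    assume "le c (P t)"
    then have "t \<in> ?S" using t by auto
    then show "ap le P c \<le> t" unfolding ap_def by (rule cInf_lower[OF _ bd])
  next
    assume tb: "ap le P c \<le> t"
    have "le (P (ap le P c)) (P t)" by (rule dipath_le[OF P b1(1) tb t(2)])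
    moreover have "P t \<in> topspace X" "P (ap le P c) \<in> topspace X" using dipath_in[OF P] t b1 by auto
    ultimately show "le c (P t)" using pos_trans[OF pos c _ _ b1(3)] by blast
  qed
qed



lemma init_dipath:
  assumes P: "dipath X le P" and b: "0 \<le> b" "b \<le> 1"
  shows "dipath X le (\<lambda>t. P (t * b))"
proof (rule dipath_comp[OF P])
  show "continuous_on {0..1} (\<lambda>t. t * b)" by (intro continuous_intros)
  show "(\<lambda>t. t * b) ` {0..1} \<subseteq> {0..1}" using b by (auto simp: mult_le_one)
  show "mono_on {0..1} (\<lambda>t. t * b)" using b unfolding mono_on_def by (auto intro: mult_right_mono)
qed simp

lemma fin_dipath:
  assumes P: "dipath X le P" and A: "0 \<le> A" "A \<le> 1"
  shows "dipath X le (\<lambda>t. P (A + t * (1 - A)))"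
proof (rule dipath_comp[OF P])
  show "continuous_on {0..1} (\<lambda>t. A + t * (1 - A))" by (intro continuous_intros)
  have "A + t * (1 - A) \<le> 1" if "0 \<le> t" "t \<le> 1" for t
  proof -
    have "t * (1 - A) \<le> 1 * (1 - A)" using that A by (intro mult_right_mono) auto
    then show ?thesis by simp
  qed
  then show "(\<lambda>t. A + t * (1 - A)) ` {0..1} \<subseteq> {0..1}" using A by auto
  show "mono_on {0..1} (\<lambda>t. A + t * (1 - A))" using A unfolding mono_on_def by (auto intro: mult_right_mono)
qed simp

lemma init_rr:
  assumes pos: "pospace X le" and r: "reparam_rel X le P Q" and a: "a \<in> topspace X" and a0: "le (P 0) a"
  shows "reparam_rel X le (initp le P a) (initp le Q a)"
proof -
  obtain \<phi> where P: "dipath X le P" and Q: "dipath X le Q" and rp: "reparam \<phi>"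
    and eq: "\<And>t. t \<in> {0..1} \<Longrightarrow> Q t = P (\<phi> t)"
    by (rule rr_get[OF r]) blast
  have Q0: "Q 0 = P 0" using rr_props[OF r] by simp
  define b where "b = bp le P a"
  define t0 where "t0 = bp le Q a"
  have bP: "0 \<le> b" "b \<le> 1" "\<And>t. 0 \<le> t \<Longrightarrow> t \<le> 1 \<Longrightarrow> le (P t) a \<longleftrightarrow> t \<le> b"
    using bp_props[OF pos P a a0] unfolding b_def by auto
  have bQ: "0 \<le> t0" "t0 \<le> 1" "le (Q t0) a" "\<And>t. 0 \<le> t \<Longrightarrow> t \<le> 1 \<Longrightarrow> le (Q t) a \<longleftrightarrow> t \<le> t0"
    using bp_props[OF pos Q a] a0 Q0 unfolding t0_def by auto
  have key: "le (Q t) a \<longleftrightarrow> \<phi> t \<le> b" if "0 \<le> t" "t \<le> 1" for t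
    using eq[of t] bP(3)[of "\<phi> t"] reparamD(2,3)[OF rp] that by auto
  have "\<phi> t0 \<le> b" using key[OF bQ(1,2)] bQ(3) by simp
  moreover have "b \<le> \<phi> t0"
  proof -
    have "\<exists>s. 0 \<le> s \<and> s \<le> 1 \<and> \<phi> s = b"
      using IVT'[of \<phi> 0 b 1] reparamD(1,5,6)[OF rp] bP by auto
    then obtain s where s: "0 \<le> s" "s \<le> 1" "\<phi> s = b" by blast
    then have "s \<le> t0" using key[of s] bQ(4)[of s] by auto
    then show ?thesis using reparamD(4)[OF rp s(1) _ bQ(2)] s by auto
  qed
  ultimately have pt0: "\<phi> t0 = b" by simp
  have iP: "dipath X le (initp le P a)" unfolding initp_def b_def[symmetric] by (rule init_dipath[OF P bP(1,2)])
  define \<psi> where "\<psi> t = (if b = 0 then t else \<phi> (t * t0) / b)" for t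
  have bnd: "0 \<le> \<phi> (t * t0) \<and> \<phi> (t * t0) \<le> b" if "0 \<le> t" "t \<le> 1" for t
  proof -
    have "t * t0 \<le> t0" using that bQ by (simp add: mult_left_le_one_le)
    moreover have "0 \<le> t * t0" using that bQ by simp
    ultimately show ?thesis using reparamD(2,4)[OF rp] bQ pt0 by auto
  qed
  have "reparam \<psi>"
  proof (cases "b = 0")
    case True
    then show ?thesis unfolding \<psi>_def using reparam_id by simp
  next
    case False
    then have bpos: "b > 0" using bP by simp
    show ?thesis
    proof (rule reparamI)
      have c1: "continuous_on {0..1} (\<lambda>t. \<phi> (t * t0))"
        by (rule continuous_on_compose2[OF reparamD(1)[OF rp]]) (use bQ in \<open>auto intro!: continuous_intros simp: mult_le_one\<close>)
      show "continuous_on {0..1} \<psi>" unfolding \<psi>_def using False by (simp add: continuous_on_divide c1)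
      show "0 \<le> \<psi> t \<and> \<psi> t \<le> 1" if "0 \<le> t" "t \<le> 1" for t
        unfolding \<psi>_def using False bnd[OF that] bpos by auto
      show "\<psi> s \<le> \<psi> t" if "0 \<le> s" "s \<le> t" "t \<le> 1" for s t
      proof -
        have "s * t0 \<le> t * t0" using that bQ by (intro mult_right_mono) auto
        moreover have "0 \<le> s * t0" "t * t0 \<le> 1" using that bQ by (auto simp: mult_le_one)
        ultimately have "\<phi> (s * t0) \<le> \<phi> (t * t0)" by (intro reparamD(4)[OF rp])
        then show ?thesis unfolding \<psi>_def using False bpos by (simp add: divide_right_mono)
      qed
      show "\<psi> 0 = 0" "\<psi> 1 = 1" unfolding \<psi>_def using False reparamD(5)[OF rp] pt0 by auto
    qed
  qed
  show ?thesis
  proof (rule rr_intro[OF iP \<open>reparam \<psi>\<close>])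
    fix t :: real assume t: "t \<in> {0..1}"
    have Qt: "initp le Q a t = P (\<phi> (t * t0))"
      unfolding initp_def t0_def[symmetric] using eq[of "t * t0"] t bQ by (auto simp: mult_le_one)
    show "initp le Q a t = initp le P a (\<psi> t)"
    proof (cases "b = 0")
      case True
      then have "\<phi> (t * t0) = 0" using bnd[of t] t by auto
      then show ?thesis using Qt True unfolding initp_def b_def[symmetric] by simp
    next
      case False
      then show ?thesis using Qt unfolding initp_def b_def[symmetric] \<psi>_def by simp
    qed
  qed
qed



lemma fin_rr:
  assumes pos: "pospace X le" and r: "reparam_rel X le P Q" and c: "c \<in> topspace X" and c1: "le c (P 1)"
  shows "reparam_rel X le (finp le P c) (finp le Q c)"
proof -
  obtain \<phi> where P: "dipath X le P" and Q: "dipath X le Q" and rp: "reparam \<phi>"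
    and eq: "\<And>t. t \<in> {0..1} \<Longrightarrow> Q t = P (\<phi> t)"
    by (rule rr_get[OF r]) blast
  have Q1: "Q 1 = P 1" using rr_props[OF r] by simp
  define A where "A = ap le P c"
  define A' where "A' = ap le Q c"
  have aP: "0 \<le> A" "A \<le> 1" "\<And>t. 0 \<le> t \<Longrightarrow> t \<le> 1 \<Longrightarrow> le c (P t) \<longleftrightarrow> A \<le> t"
    using ap_props[OF pos P c c1] unfolding A_def by auto
  have aQ: "0 \<le> A'" "A' \<le> 1" "le c (Q A')" "\<And>t. 0 \<le> t \<Longrightarrow> t \<le> 1 \<Longrightarrow> le c (Q t) \<longleftrightarrow> A' \<le> t"
    using ap_props[OF pos Q c] c1 Q1 unfolding A'_def by auto
  have key: "le c (Q t) \<longleftrightarrow> A \<le> \<phi> t" if "0 \<le> t" "t \<le> 1" for t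
    using eq[of t] aP(3)[of "\<phi> t"] reparamD(2,3)[OF rp] that by auto
  have "A \<le> \<phi> A'" using key[OF aQ(1,2)] aQ(3) by simp
  moreover have "\<phi> A' \<le> A"
  proof -
    have "\<exists>s. 0 \<le> s \<and> s \<le> 1 \<and> \<phi> s = A"
      using IVT'[of \<phi> 0 A 1] reparamD(1,5,6)[OF rp] aP by auto
    then obtain s where s: "0 \<le> s" "s \<le> 1" "\<phi> s = A" by blast
    then have "A' \<le> s" using key[of s] aQ(4)[of s] by auto
    then show ?thesis using reparamD(4)[OF rp aQ(1) _ s(2)] s by auto
  qed
  ultimately have pA: "\<phi> A' = A" by simp
  have fP: "dipath X le (finp le P c)" unfolding finp_def A_def[symmetric] by (rule fin_dipath[OF P aP(1,2)])
  define g where "g t = A' + t * (1 - A')" for t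
  have g: "A' \<le> g t" "g t \<le> 1" if "0 \<le> t" "t \<le> 1" for t
  proof -
    have "t * (1 - A') \<le> 1 * (1 - A')" using that aQ by (intro mult_right_mono) auto
    moreover have "0 \<le> t * (1 - A')" using that aQ by simp
    ultimately show "A' \<le> g t" "g t \<le> 1" unfolding g_def by auto
  qed
  have gmono: "g s \<le> g t" if "s \<le> t" for s t
    unfolding g_def using that aQ by (auto intro: mult_right_mono)
  define \<psi> where "\<psi> t = (if A = 1 then t else (\<phi> (g t) - A) / (1 - A))" for t
  have bnd: "A \<le> \<phi> (g t) \<and> \<phi> (g t) \<le> 1" if "0 \<le> t" "t \<le> 1" for t
    using reparamD(3,4)[OF rp] g[OF that] aQ pA by fastforce
  have "reparam \<psi>"
  proof (cases "A = 1")
    case True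
    then show ?thesis unfolding \<psi>_def using reparam_id by simp
  next
    case False
    then have Apos: "1 - A > 0" using aP by simp
    show ?thesis
    proof (rule reparamI)
      have c1: "continuous_on {0..1} (\<lambda>t. \<phi> (g t))"
        by (rule continuous_on_compose2[OF reparamD(1)[OF rp]])
          (use g aQ in \<open>auto simp: g_def intro!: continuous_intros\<close>)
      show "continuous_on {0..1} \<psi>" unfolding \<psi>_def using False
        by (simp add: continuous_on_divide c1 continuous_on_diff)
      show "0 \<le> \<psi> t \<and> \<psi> t \<le> 1" if "0 \<le> t" "t \<le> 1" for t
        unfolding \<psi>_def using False bnd[OF that] Apos by auto
      show "\<psi> s \<le> \<psi> t" if "0 \<le> s" "s \<le> t" "t \<le> 1" for s t
      proof -
        have "\<phi> (g s) \<le> \<phi> (g t)"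
          using reparamD(4)[OF rp] g[of s] g[of t] gmono[of s t] aQ that by fastforce
        then show ?thesis unfolding \<psi>_def using False Apos by (simp add: divide_right_mono)
      qed
      have "g 0 = A'" "g 1 = 1" unfolding g_def by auto
      then show "\<psi> 0 = 0" "\<psi> 1 = 1" unfolding \<psi>_def using False reparamD(6)[OF rp] pA by auto
    qed
  qed
  show ?thesis
  proof (rule rr_intro[OF fP \<open>reparam \<psi>\<close>])
    fix t :: real assume t: "t \<in> {0..1}"
    have Qt: "finp le Q c t = P (\<phi> (g t))"
      unfolding finp_def A'_def[symmetric] g_def[symmetric] using eq[of "g t"] t g[of t] aQ by auto
    show "finp le Q c t = finp le P c (\<psi> t)"
    proof (cases "A = 1")
      case True
      then have "\<phi> (g t) = 1" using bnd[of t] t by auto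
      then show ?thesis using Qt True unfolding finp_def A_def[symmetric] by simp
    next
      case False
      then have "A + (\<phi> (g t) - A) / (1 - A) * (1 - A) = \<phi> (g t)" by simp
      then show ?thesis using Qt False unfolding finp_def A_def[symmetric] \<psi>_def by simp
    qed
  qed
qed



lemma init_EQ:
  assumes pos: "pospace X le" and E: "EQ X le P Q" and P: "dipath X le P" and a: "a \<in> topspace X" and a0: "le (P 0) a"
  shows "EQ X le (initp le P a) (initp le Q a)"
  using E
proof (induction rule: equivclp_induct)
  case base
  then show ?case by simp
next
  case (step y z)
  have y: "y 0 = P 0" using eq_props[OF step(1) P] by auto
  from step(2) show ?case
  proof
    assume r: "reparam_rel X le y z"
    have "reparam_rel X le (initp le y a) (initp le z a)" by (rule init_rr[OF pos r a]) (simp add: y a0)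
    then show ?case using step(3) by (blast intro: equivclp_into_equivclp)
  next
    assume r: "reparam_rel X le z y"
    have "z 0 = y 0" using rr_props[OF r] by simp
    then have "reparam_rel X le (initp le z a) (initp le y a)" by (intro init_rr[OF pos r a]) (simp add: y a0)
    then show ?case using step(3) by (blast intro: equivclp_into_equivclp)
  qed
qed

lemma fin_EQ:
  assumes pos: "pospace X le" and E: "EQ X le P Q" and P: "dipath X le P" and c: "c \<in> topspace X" and c1: "le c (P 1)"
  shows "EQ X le (finp le P c) (finp le Q c)"
  using E
proof (induction rule: equivclp_induct)
  case base
  then show ?case by simp
next
  case (step y z)
  have y: "y 1 = P 1" using eq_props[OF step(1) P] by auto
  from step(2) show ?case
  proof
    assume r: "reparam_rel X le y z"
    have "reparam_rel X le (finp le y c) (finp le z c)" by (rule fin_rr[OF pos r c]) (simp add: y c1)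
    then show ?case using step(3) by (blast intro: equivclp_into_equivclp)
  next
    assume r: "reparam_rel X le z y"
    have "z 1 = y 1" using rr_props[OF r] by simp
    then have "reparam_rel X le (finp le z c) (finp le y c)" by (intro fin_rr[OF pos r c]) (simp add: y c1)
    then show ?case using step(3) by (blast intro: equivclp_into_equivclp)
  qed
qed

lemma join3_dipath:
  assumes pos: "pospace X le" and v: "dipath X le v" and f: "dipath X le f" and u: "dipath X le u"
    and e1: "v 1 = f 0" and e2: "f 1 = u 0"
  shows "dipath X le (pjoin (pjoin v f) u)" "pjoin (pjoin v f) u 0 = v 0" "pjoin (pjoin v f) u 1 = u 1"
proof -
  have vf: "dipath X le (pjoin v f)" by (rule pjoin_dipath[OF pos v f e1])
  show "dipath X le (pjoin (pjoin v f) u)" by (rule pjoin_dipath[OF pos vf u]) (simp add: pjoin_def e2)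
  show "pjoin (pjoin v f) u 0 = v 0" "pjoin (pjoin v f) u 1 = u 1" by (simp_all add: pjoin_def)
qed

lemma init_of_join:
  assumes pos: "pospace X le" and v: "dipath X le v" and f: "dipath X le f" and u: "dipath X le u"
    and e1: "v 1 = f 0" and e2: "f 1 = u 0"
  shows "reparam_rel X le v (initp le (pjoin (pjoin v f) u) (v 1))"
proof -
  define P where "P = pjoin (pjoin v f) u"
  define a where "a = v 1"
  have P: "dipath X le P" "P 0 = v 0" unfolding P_def using join3_dipath[OF assms] by auto
  have a: "a \<in> topspace X" unfolding a_def using dipath_in[OF v] by simp
  have a0: "le (P 0) a" unfolding a_def P(2) by (rule dipath_le[OF v]) auto
  define b where "b = bp le P a"
  have bP: "0 \<le> b" "b \<le> 1" "\<And>t. 0 \<le> t \<Longrightarrow> t \<le> 1 \<Longrightarrow> le (P t) a \<longleftrightarrow> t \<le> b"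
    using bp_props[OF pos P(1) a a0] unfolding b_def by auto
  have P14: "P (1/4) = a" unfolding P_def a_def pjoin_def by simp
  have "le (P (1/4)) a" unfolding P14 by (rule pos_refl[OF pos a])
  then have b14: "1/4 \<le> b" using bP(3)[of "1/4"] by simp
  define \<phi> where "\<phi> t = min 1 (4 * t * b)" for t
  have "reparam \<phi>"
  proof (rule reparamI)
    show "continuous_on {0..1} \<phi>" unfolding \<phi>_def by (intro continuous_intros)
    show "0 \<le> \<phi> t \<and> \<phi> t \<le> 1" if "0 \<le> t" "t \<le> 1" for t
      unfolding \<phi>_def using that bP by auto
    show "\<phi> s \<le> \<phi> t" if "0 \<le> s" "s \<le> t" "t \<le> 1" for s t
    proof -
      have "4 * s * b \<le> 4 * t * b" using that bP by (intro mult_right_mono) auto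
      then show ?thesis unfolding \<phi>_def by auto
    qed
    show "\<phi> 0 = 0" "\<phi> 1 = 1" unfolding \<phi>_def using b14 by auto
  qed
  have "reparam_rel X le v (initp le P a)"
  proof (rule rr_intro[OF v \<open>reparam \<phi>\<close>])
    fix t :: real assume t: "t \<in> {0..1}"
    have tb: "0 \<le> t * b" "t * b \<le> b" using t bP by (auto simp: mult_left_le_one_le)
    show "initp le P a t = v (\<phi> t)"
    proof (cases "t * b \<le> 1/4")
      case True
      then have "\<phi> t = 4 * (t * b)" unfolding \<phi>_def by auto
      moreover have "P (t * b) = v (4 * (t * b))" unfolding P_def pjoin_def using True by simp
      ultimately show ?thesis unfolding initp_def b_def[symmetric] by simp
    next
      case False
      then have "\<phi> t = 1" unfolding \<phi>_def by auto
      moreover have "P (t * b) = a"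
      proof (rule pos_antisym[OF pos])
        show "P (t * b) \<in> topspace X" using dipath_in[OF P(1)] tb bP by auto
        show "a \<in> topspace X" by (rule a)
        show "le (P (t * b)) a" using bP(3)[of "t * b"] tb bP by auto
        show "le a (P (t * b))" unfolding P14[symmetric] using False tb bP
          by (intro dipath_le[OF P(1)]) auto
      qed
      ultimately show ?thesis unfolding initp_def b_def[symmetric] by (simp add: a_def)
    qed
  qed
  then show ?thesis unfolding P_def a_def .
qed

lemma fin_of_join:
  assumes pos: "pospace X le" and v: "dipath X le v" and f: "dipath X le f" and u: "dipath X le u"
    and e1: "v 1 = f 0" and e2: "f 1 = u 0"
  shows "reparam_rel X le u (finp le (pjoin (pjoin v f) u) (u 0))"
proof -
  define P where "P = pjoin (pjoin v f) u"
  define c where "c = u 0"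
  have P: "dipath X le P" "P 1 = u 1" unfolding P_def using join3_dipath[OF assms] by auto
  have c: "c \<in> topspace X" unfolding c_def using dipath_in[OF u] by simp
  have c1: "le c (P 1)" unfolding c_def P(2) by (rule dipath_le[OF u]) auto
  define A where "A = ap le P c"
  have aP: "0 \<le> A" "A \<le> 1" "\<And>t. 0 \<le> t \<Longrightarrow> t \<le> 1 \<Longrightarrow> le c (P t) \<longleftrightarrow> A \<le> t"
    using ap_props[OF pos P(1) c c1] unfolding A_def by auto
  have P12: "P (1/2) = c" unfolding P_def c_def pjoin_def using e2 by simp
  have "le c (P (1/2))" unfolding P12 by (rule pos_refl[OF pos c])
  then have A12: "A \<le> 1/2" using aP(3)[of "1/2"] by simp
  define g where "g t = A + t * (1 - A)" for t
  have g: "A \<le> g t" "g t \<le> 1" if "0 \<le> t" "t \<le> 1" for t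
  proof -
    have "t * (1 - A) \<le> 1 * (1 - A)" using that aP by (intro mult_right_mono) auto
    moreover have "0 \<le> t * (1 - A)" using that aP by simp
    ultimately show "A \<le> g t" "g t \<le> 1" unfolding g_def by auto
  qed
  have gmono: "g s \<le> g t" if "s \<le> t" for s t
    unfolding g_def using that aP by (auto intro: mult_right_mono)
  define \<phi> where "\<phi> t = max 0 (2 * g t - 1)" for t
  have "reparam \<phi>"
  proof (rule reparamI)
    show "continuous_on {0..1} \<phi>" unfolding \<phi>_def g_def by (intro continuous_intros)
    show "0 \<le> \<phi> t \<and> \<phi> t \<le> 1" if "0 \<le> t" "t \<le> 1" for t
      unfolding \<phi>_def using g[OF that] by auto
    show "\<phi> s \<le> \<phi> t" if "0 \<le> s" "s \<le> t" "t \<le> 1" for s t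
      unfolding \<phi>_def using gmono[of s t] that by auto
    have "g 0 = A" "g 1 = 1" unfolding g_def by auto
    then show "\<phi> 0 = 0" "\<phi> 1 = 1" unfolding \<phi>_def using A12 by auto
  qed
  have "reparam_rel X le u (finp le P c)"
  proof (rule rr_intro[OF u \<open>reparam \<phi>\<close>])
    fix t :: real assume t: "t \<in> {0..1}"
    have gt: "A \<le> g t" "g t \<le> 1" using g t by auto
    show "finp le P c t = u (\<phi> t)"
    proof (cases "g t \<le> 1/2")
      case False
      then have "\<phi> t = 2 * g t - 1" unfolding \<phi>_def by auto
      moreover have "P (g t) = u (2 * g t - 1)" unfolding P_def pjoin_def using False by simp
      ultimately show ?thesis unfolding finp_def A_def[symmetric] g_def[symmetric] by simp
    next
      case True
      then have "\<phi> t = 0" unfolding \<phi>_def by auto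
      moreover have "P (g t) = c"
      proof (rule pos_antisym[OF pos])
        show "P (g t) \<in> topspace X" using dipath_in[OF P(1)] gt aP by auto
        show "c \<in> topspace X" by (rule c)
        show "le c (P (g t))" using aP(3)[of "g t"] gt aP by auto
        show "le (P (g t)) c" unfolding P12[symmetric] using True gt aP
          by (intro dipath_le[OF P(1)]) auto
      qed
      ultimately show ?thesis unfolding finp_def A_def[symmetric] g_def[symmetric] by (simp add: c_def)
    qed
  qed
  then show ?thesis unfolding P_def c_def .
qed

lemma cancel:
  assumes pos: "pospace X le" and v: "dipath X le v" and f: "dipath X le f" and u: "dipath X le u"
    and v': "dipath X le v'" and u': "dipath X le u'"
    and e1: "v 1 = f 0" and e2: "f 1 = u 0" and e1': "v' 1 = f 0" and e2': "f 1 = u' 0"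
    and E: "EQ X le (pjoin (pjoin v f) u) (pjoin (pjoin v' f) u')"
  shows "EQ X le v v'" "EQ X le u u'"
proof -
  define P where "P = pjoin (pjoin v f) u"
  define P' where "P' = pjoin (pjoin v' f) u'"
  have P: "dipath X le P" "P 0 = v 0" "P 1 = u 1" unfolding P_def using join3_dipath[OF pos v f u e1 e2] by auto
  have a: "f 0 \<in> topspace X" using dipath_in[OF f] by simp
  have c: "f 1 \<in> topspace X" using dipath_in[OF f] by simp
  have a0: "le (P 0) (f 0)" unfolding P(2) e1[symmetric] by (rule dipath_le[OF v]) auto
  have c1: "le (f 1) (P 1)" unfolding P(3) e2 by (rule dipath_le[OF u]) auto
  have "EQ X le (initp le P (f 0)) (initp le P' (f 0))"
    by (rule init_EQ[OF pos _ P(1) a a0]) (use E in \<open>simp add: P_def P'_def\<close>)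
  moreover have "reparam_rel X le v (initp le P (f 0))"
    using init_of_join[OF pos v f u e1 e2] unfolding P_def e1 .
  moreover have "reparam_rel X le v' (initp le P' (f 0))"
    using init_of_join[OF pos v' f u' e1' e2'] unfolding P'_def e1' .
  ultimately show "EQ X le v v'" by (blast intro: equivclp_trans equivclp_sym)
  have "EQ X le (finp le P (f 1)) (finp le P' (f 1))"
    by (rule fin_EQ[OF pos _ P(1) c c1]) (use E in \<open>simp add: P_def P'_def\<close>)
  moreover have "reparam_rel X le u (finp le P (f 1))"
    using fin_of_join[OF pos v f u e1 e2] unfolding P_def e2 .
  moreover have "reparam_rel X le u' (finp le P' (f 1))"
    using fin_of_join[OF pos v' f u' e1' e2'] unfolding P'_def e2' .
  ultimately show "EQ X le u u'" by (blast intro: equivclp_trans equivclp_sym)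
qed



lemma traces_get:
  assumes "A \<in> traces X le"
  obtains p where "dipath X le p" "A = trace_of X le p"
  using assms unfolding traces_def by blast

lemma trace_in_traces: "dipath X le p \<Longrightarrow> trace_of X le p \<in> traces X le"
  unfolding traces_def by blast

lemma tcat_T:
  assumes pos: "pospace X le" and A: "A \<in> traces X le" and B: "B \<in> traces X le" and e: "ttgt A = tsrc B"
  shows "tcat X le A B \<in> traces X le" "tsrc (tcat X le A B) = tsrc A" "ttgt (tcat X le A B) = ttgt B"
proof -
  obtain a where a: "dipath X le a" "A = trace_of X le a" using A by (rule traces_get)
  obtain b where b: "dipath X le b" "B = trace_of X le b" using B by (rule traces_get)
  have ab: "a 1 = b 0" using e a b ttgt_trace tsrc_trace by metis
  have eq: "tcat X le A B = trace_of X le (pjoin a b)" unfolding a(2) b(2) by (rule tcat_trace[OF pos a(1) b(1) ab])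
  have d: "dipath X le (pjoin a b)" by (rule pjoin_dipath[OF pos a(1) b(1) ab])
  show "tcat X le A B \<in> traces X le" unfolding eq by (rule trace_in_traces[OF d])
  show "tsrc (tcat X le A B) = tsrc A" using eq a(2) tsrc_trace[OF d] tsrc_trace[OF a(1)]
    by (simp add: pjoin_def)
  show "ttgt (tcat X le A B) = ttgt B" using eq b(2) ttgt_trace[OF d] ttgt_trace[OF b(1)]
    by (simp add: pjoin_def)
qed

lemma tcat_assoc:
  assumes pos: "pospace X le" and A: "A \<in> traces X le" and B: "B \<in> traces X le" and C: "C \<in> traces X le"
    and e1: "ttgt A = tsrc B" and e2: "ttgt B = tsrc C"
  shows "tcat X le (tcat X le A B) C = tcat X le A (tcat X le B C)"
proof -
  obtain a where a: "dipath X le a" "A = trace_of X le a" using A by (rule traces_get)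
  obtain b where b: "dipath X le b" "B = trace_of X le b" using B by (rule traces_get)
  obtain c where c: "dipath X le c" "C = trace_of X le c" using C by (rule traces_get)
  have ab: "a 1 = b 0" using e1 a b ttgt_trace tsrc_trace by metis
  have bc: "b 1 = c 0" using e2 b c ttgt_trace tsrc_trace by metis
  have dab: "dipath X le (pjoin a b)" by (rule pjoin_dipath[OF pos a(1) b(1) ab])
  have dbc: "dipath X le (pjoin b c)" by (rule pjoin_dipath[OF pos b(1) c(1) bc])
  have "tcat X le (tcat X le A B) C = trace_of X le (pjoin (pjoin a b) c)"
    unfolding a(2) b(2) c(2) tcat_trace[OF pos a(1) b(1) ab]
    by (rule tcat_trace[OF pos dab c(1)]) (simp add: pjoin_def bc)
  also have "\<dots> = trace_of X le (pjoin a (pjoin b c))"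
    unfolding trace_of_eq by (rule pjoin_assoc[OF pos a(1) b(1) c(1) ab bc])
  also have "\<dots> = tcat X le A (tcat X le B C)"
    unfolding a(2) b(2) c(2) tcat_trace[OF pos b(1) c(1) bc]
    by (rule tcat_trace[OF pos a(1) dbc, symmetric]) (simp add: pjoin_def ab)
  finally show ?thesis .
qed

lemma idt_T:
  assumes pos: "pospace X le" and x: "x \<in> topspace X"
  shows "trace_of X le (\<lambda>t. x) \<in> traces X le" "tsrc (trace_of X le (\<lambda>t. x)) = x" "ttgt (trace_of X le (\<lambda>t. x)) = x"
  using const_dipath[OF pos x] trace_in_traces tsrc_trace ttgt_trace by auto

lemma tcat_units:
  assumes pos: "pospace X le" and A: "A \<in> traces X le"
  shows "tcat X le (tcat X le (trace_of X le (\<lambda>t. tsrc A)) A) (trace_of X le (\<lambda>t. ttgt A)) = A"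
proof -
  obtain a where a: "dipath X le a" "A = trace_of X le a" using A by (rule traces_get)
  have s: "tsrc (trace_of X le a) = a 0" "ttgt (trace_of X le a) = a 1" using a tsrc_trace ttgt_trace by auto
  have x0: "a 0 \<in> topspace X" "a 1 \<in> topspace X" using dipath_in[OF a(1)] by auto
  have c0: "dipath X le (\<lambda>t. a 0)" "dipath X le (\<lambda>t. a 1)" using const_dipath[OF pos] x0 by auto
  have d1: "dipath X le (pjoin (\<lambda>t. a 0) a)" by (rule pjoin_dipath[OF pos c0(1) a(1)]) simp
  have "tcat X le (trace_of X le (\<lambda>t. a 0)) (trace_of X le a) = trace_of X le (pjoin (\<lambda>t. a 0) a)"
    by (rule tcat_trace[OF pos c0(1) a(1)]) simp
  also have "\<dots> = trace_of X le a"
    unfolding trace_of_eq using pjoin_const_left[OF pos a(1)] by (blast intro: equivclp_sym)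
  finally have e1: "tcat X le (trace_of X le (\<lambda>t. a 0)) (trace_of X le a) = trace_of X le a" .
  have "tcat X le (trace_of X le a) (trace_of X le (\<lambda>t. a 1)) = trace_of X le (pjoin a (\<lambda>t. a 1))"
    by (rule tcat_trace[OF pos a(1) c0(2)]) simp
  also have "\<dots> = trace_of X le a"
    unfolding trace_of_eq using pjoin_const_right[OF pos a(1)] by (blast intro: equivclp_sym)
  finally have e2: "tcat X le (trace_of X le a) (trace_of X le (\<lambda>t. a 1)) = trace_of X le a" .
  show ?thesis unfolding a(2) s e1 e2 ..
qed

lemma tcancel:
  assumes pos: "pospace X le" and f: "f \<in> traces X le" and u: "u \<in> traces X le" and v: "v \<in> traces X le"
    and u': "u' \<in> traces X le" and v': "v' \<in> traces X le"
    and e1: "tsrc u = ttgt f" and e2: "ttgt v = tsrc f" and e1': "tsrc u' = ttgt f" and e2': "ttgt v' = tsrc f"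
    and E: "tcat X le (tcat X le v f) u = tcat X le (tcat X le v' f) u'"
  shows "u = u'" "v = v'"
proof -
  obtain pf where pf: "dipath X le pf" "f = trace_of X le pf" using f by (rule traces_get)
  obtain pu where pu: "dipath X le pu" "u = trace_of X le pu" using u by (rule traces_get)
  obtain pv where pv: "dipath X le pv" "v = trace_of X le pv" using v by (rule traces_get)
  obtain pu' where pu': "dipath X le pu'" "u' = trace_of X le pu'" using u' by (rule traces_get)
  obtain pv' where pv': "dipath X le pv'" "v' = trace_of X le pv'" using v' by (rule traces_get)
  have a1: "pv 1 = pf 0" using e2 pv pf ttgt_trace tsrc_trace by metis
  have a2: "pf 1 = pu 0" using e1 pu pf ttgt_trace tsrc_trace by metis
  have a1': "pv' 1 = pf 0" using e2' pv' pf ttgt_trace tsrc_trace by metis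
  have a2': "pf 1 = pu' 0" using e1' pu' pf ttgt_trace tsrc_trace by metis
  have h: "tcat X le (tcat X le (trace_of X le p) (trace_of X le pf)) (trace_of X le q)
      = trace_of X le (pjoin (pjoin p pf) q)"
    if "dipath X le p" "dipath X le q" "p 1 = pf 0" "pf 1 = q 0" for p q
  proof -
    have d: "dipath X le (pjoin p pf)" by (rule pjoin_dipath[OF pos that(1) pf(1) that(3)])
    show ?thesis unfolding tcat_trace[OF pos that(1) pf(1) that(3)]
      by (rule tcat_trace[OF pos d that(2)]) (simp add: pjoin_def that(4))
  qed
  have "EQ X le (pjoin (pjoin pv pf) pu) (pjoin (pjoin pv' pf) pu')"
    using E unfolding pf(2) pu(2) pv(2) pu'(2) pv'(2) h[OF pv(1) pu(1) a1 a2] h[OF pv'(1) pu'(1) a1' a2']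
      trace_of_eq .
  note c = cancel[OF pos pv(1) pf(1) pu(1) pv'(1) pu'(1) a1 a2 a1' a2' this]
  show "u = u'" unfolding pu(2) pu'(2) trace_of_eq by (rule c(2))
  show "v = v'" unfolding pv(2) pv'(2) trace_of_eq by (rule c(1))
qed



definition FP where
  "FP X le f g uv \<longleftrightarrow> fst uv \<in> traces X le \<and> snd uv \<in> traces X le \<and> tsrc (fst uv) = ttgt f \<and>
     ttgt (snd uv) = tsrc f \<and> g = tcat X le (tcat X le (snd uv) f) (fst uv)"

definition fac where
  "fac X le f g = (SOME uv. FP X le f g uv)"

lemma fac_spec:
  assumes "trace_le X le f g"
  shows "FP X le f g (fac X le f g)"
proof -
  from assms obtain u v where "u \<in> traces X le" "v \<in> traces X le" "ttgt u = tsrc f" "ttgt f = tsrc v"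
    "g = tcat X le (tcat X le u f) v" unfolding trace_le_def by blast
  then have "FP X le f g (v, u)" unfolding FP_def by simp
  then show ?thesis unfolding fac_def by (rule someI)
qed

lemma fac_unique:
  assumes pos: "pospace X le" and f: "f \<in> traces X le" and u: "u \<in> traces X le" and v: "v \<in> traces X le"
    and e1: "tsrc u = ttgt f" and e2: "ttgt v = tsrc f"
  shows "fac X le f (tcat X le (tcat X le v f) u) = (u, v)"
proof -
  let ?g = "tcat X le (tcat X le v f) u"
  have "trace_le X le f ?g" unfolding trace_le_def using u v e1[symmetric] e2 by blast
  then have F: "FP X le f ?g (fac X le f ?g)" by (rule fac_spec)
  obtain u0 v0 where uv: "fac X le f ?g = (u0, v0)" by fastforce
  have p: "u0 \<in> traces X le" "v0 \<in> traces X le" "tsrc u0 = ttgt f" "ttgt v0 = tsrc f"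
    "?g = tcat X le (tcat X le v0 f) u0" using F unfolding uv FP_def by auto
  have "u = u0" "v = v0" using tcancel[OF pos f u v p(1,2) e1 e2 p(3,4) p(5)] by auto
  then show ?thesis using uv by simp
qed

lemma T_ends:
  assumes "A \<in> traces X le"
  shows "tsrc A \<in> topspace X" "ttgt A \<in> topspace X"
proof -
  obtain a where a: "dipath X le a" "A = trace_of X le a" using assms by (rule traces_get)
  show "tsrc A \<in> topspace X" "ttgt A \<in> topspace X"
    using a tsrc_trace[OF a(1)] ttgt_trace[OF a(1)] dipath_in[OF a(1)] by auto
qed

lemma poset_cat_simps:
  "Ob (poset_cat A r) = A" "Ar (poset_cat A r) = {(a, b). a \<in> A \<and> b \<in> A \<and> r a b}"
  "Dom (poset_cat A r) = fst" "Cod (poset_cat A r) = snd" "Id (poset_cat A r) = (\<lambda>a. (a, a))"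
  "Comp (poset_cat A r) = (\<lambda>g f. (fst f, snd g))"
  by (simp_all add: poset_cat_def)

lemma fact_cat_simps:
  "Ob (fact_cat C) = Ar C"
  "Ar (fact_cat C) = {(f, u, v). f \<in> Ar C \<and> u \<in> Ar C \<and> v \<in> Ar C \<and> Dom C u = Cod C f \<and> Cod C v = Dom C f}"
  "Dom (fact_cat C) = (\<lambda>(f, u, v). f)"
  "Cod (fact_cat C) = (\<lambda>(f, u, v). Comp C u (Comp C f v))"
  "Id (fact_cat C) = (\<lambda>f. (f, Id C (Cod C f), Id C (Dom C f)))"
  "Comp (fact_cat C) = (\<lambda>(f', u', v') (f, u, v). (f, Comp C u' u, Comp C v v'))"
  by (simp_all add: fact_cat_def)

lemma trace_cat_simps:
  "Ob (trace_cat X le) = topspace X" "Ar (trace_cat X le) = traces X le"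
  "Dom (trace_cat X le) = tsrc" "Cod (trace_cat X le) = ttgt"
  "Id (trace_cat X le) = (\<lambda>x. trace_of X le (\<lambda>t. x))"
  "Comp (trace_cat X le) = (\<lambda>g f. tcat X le f g)"
  by (simp_all add: trace_cat_def)

theorem proposition5p3:
  fixes X :: "'a topology" and le :: "'a \<Rightarrow> 'a \<Rightarrow> bool"
  assumes "pospace X le"
  shows "cat_iso (poset_cat (traces X le) (trace_le X le)) (fact_cat (trace_cat X le))"
proof -
  note pos = assms
  let ?T = "traces X le"
  define Fa where "Fa = (\<lambda>x. (fst x, fst (fac X le (fst x) (snd x)), snd (fac X le (fst x) (snd x))))"
  have FaP: "fst (fac X le f g) \<in> ?T \<and> snd (fac X le f g) \<in> ?T \<and> tsrc (fst (fac X le f g)) = ttgt f \<and>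
     ttgt (snd (fac X le f g)) = tsrc f \<and> g = tcat X le (tcat X le (snd (fac X le f g)) f) (fst (fac X le f g))"
    if "trace_le X le f g" for f g
    using fac_spec[OF that] unfolding FP_def by blast
  let ?A = "{(a, b). a \<in> ?T \<and> b \<in> ?T \<and> trace_le X le a b}"
  let ?B = "{(f, u, v). f \<in> ?T \<and> u \<in> ?T \<and> v \<in> ?T \<and> tsrc u = ttgt f \<and> ttgt v = tsrc f}"
  have bij: "bij_betw Fa ?A ?B"
    unfolding bij_betw_def
  proof
    show "inj_on Fa ?A"
    proof (rule inj_onI)
      fix x y assume x: "x \<in> ?A" and y: "y \<in> ?A" and e: "Fa x = Fa y"
      obtain f g where xfg: "x = (f, g)" by fastforce
      obtain f' g' where yfg: "y = (f', g')" by fastforce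
      have "f = f'" using e unfolding xfg yfg Fa_def by simp
      moreover have "fac X le f g = fac X le f' g'" using e unfolding xfg yfg Fa_def by (auto simp: prod_eq_iff)
      moreover have "g = tcat X le (tcat X le (snd (fac X le f g)) f) (fst (fac X le f g))"
        using FaP x unfolding xfg by auto
      moreover have "g' = tcat X le (tcat X le (snd (fac X le f' g')) f') (fst (fac X le f' g'))"
        using FaP y unfolding yfg by auto
      ultimately show "x = y" unfolding xfg yfg by simp
    qed
    show "Fa ` ?A = ?B"
    proof (intro set_eqI iffI)
      fix y assume "y \<in> Fa ` ?A"
      then obtain f g where "(f, g) \<in> ?A" "y = Fa (f, g)" by blast
      then show "y \<in> ?B" using FaP[of f g] unfolding Fa_def by auto
    next
      fix y assume y: "y \<in> ?B"
      then obtain f u v where yy: "y = (f, u, v)" and m: "f \<in> ?T" "u \<in> ?T" "v \<in> ?T" "tsrc u = ttgt f" "ttgt v = tsrc f"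
        by blast
      let ?g = "tcat X le (tcat X le v f) u"
      have vf: "tcat X le v f \<in> ?T" "ttgt (tcat X le v f) = ttgt f" using tcat_T[OF pos m(3,1)] m by auto
      have g: "?g \<in> ?T" using tcat_T[OF pos vf(1) m(2)] vf m by auto
      have "trace_le X le f ?g" unfolding trace_le_def using m(2,3) m(4)[symmetric] m(5) by blast
      then have "(f, ?g) \<in> ?A" using m g by auto
      moreover have "Fa (f, ?g) = y" unfolding Fa_def yy using fac_unique[OF pos m] by simp
      ultimately show "y \<in> Fa ` ?A" by force
    qed
  qed
  have domcod: "fst (Fa x) = fst x \<and> (case Fa x of (f, u, v) \<Rightarrow> tcat X le (tcat X le v f) u) = snd x"
    if x: "x \<in> ?A" for x
  proof -
    obtain f g where xfg: "x = (f, g)" by fastforce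
    have P: "trace_le X le f g" using x xfg by auto
    show ?thesis using FaP[OF P] unfolding xfg Fa_def by (simp add: case_prod_beta)
  qed
  have idf: "Fa (x, x) = (x, trace_of X le (\<lambda>t. ttgt x), trace_of X le (\<lambda>t. tsrc x))"
    if x: "x \<in> ?T" for x
  proof -
    let ?u = "trace_of X le (\<lambda>t. ttgt x)"
    let ?v = "trace_of X le (\<lambda>t. tsrc x)"
    have u: "?u \<in> ?T" "tsrc ?u = ttgt x" using idt_T[OF pos T_ends(2)[OF x]] by auto
    have v: "?v \<in> ?T" "ttgt ?v = tsrc x" using idt_T[OF pos T_ends(1)[OF x]] by auto
    have "fac X le x (tcat X le (tcat X le ?v x) ?u) = (?u, ?v)"
      by (rule fac_unique[OF pos x u(1) v(1) u(2) v(2)])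
    then have "fac X le x x = (?u, ?v)" using tcat_units[OF pos x] by simp
    then show "Fa (x, x) = (x, ?u, ?v)" unfolding Fa_def by simp
  qed
  have compf: "Fa (fst x, snd y) =
       (case Fa y of (f', u', v') \<Rightarrow> \<lambda>(f, u, v). (f, tcat X le u u', tcat X le v' v)) (Fa x)"
    if x: "x \<in> ?A" and y: "y \<in> ?A" and xy: "snd x = fst y" for x y
  proof -
    obtain f g where xfg: "x = (f, g)" by fastforce
    obtain h where yfg: "y = (g, h)" using xy xfg by (metis prod.collapse snd_conv)
    have m: "f \<in> ?T" "g \<in> ?T" "h \<in> ?T" "trace_le X le f g" "trace_le X le g h" using x y xfg yfg by auto
    obtain u1 v1 where f1: "fac X le f g = (u1, v1)" by fastforce
    obtain u2 v2 where f2: "fac X le g h = (u2, v2)" by fastforce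
    have p1: "u1 \<in> ?T" "v1 \<in> ?T" "tsrc u1 = ttgt f" "ttgt v1 = tsrc f" "g = tcat X le (tcat X le v1 f) u1"
      using FaP[OF m(4)] unfolding f1 by auto
    have p2: "u2 \<in> ?T" "v2 \<in> ?T" "tsrc u2 = ttgt g" "ttgt v2 = tsrc g" "h = tcat X le (tcat X le v2 g) u2"
      using FaP[OF m(5)] unfolding f2 by auto
    have vf: "tcat X le v1 f \<in> ?T" "tsrc (tcat X le v1 f) = tsrc v1" "ttgt (tcat X le v1 f) = ttgt f"
      using tcat_T[OF pos p1(2) m(1) p1(4)] by auto
    have gg: "tsrc g = tsrc v1" "ttgt g = ttgt u1"
      using tcat_T[OF pos vf(1) p1(1)] vf p1 by auto
    have vv: "tcat X le v2 v1 \<in> ?T" "tsrc (tcat X le v2 v1) = tsrc v2" "ttgt (tcat X le v2 v1) = ttgt v1"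
      using tcat_T[OF pos p2(2) p1(2)] p2(4) gg by auto
    have uu: "tcat X le u1 u2 \<in> ?T" "tsrc (tcat X le u1 u2) = tsrc u1" "ttgt (tcat X le u1 u2) = ttgt u2"
      using tcat_T[OF pos p1(1) p2(1)] p2(3) gg by auto
    define W where "W = tcat X le (tcat X le v2 v1) f"
    have W: "W \<in> ?T" "ttgt W = ttgt f" unfolding W_def using tcat_T[OF pos vv(1) m(1)] vv p1 by auto
    have "h = tcat X le (tcat X le v2 (tcat X le (tcat X le v1 f) u1)) u2" using p2(5) p1(5) by simp
    also have "tcat X le v2 (tcat X le (tcat X le v1 f) u1) = tcat X le (tcat X le v2 (tcat X le v1 f)) u1"
      by (rule tcat_assoc[OF pos p2(2) vf(1) p1(1), symmetric]) (use p2 gg vf p1 in auto)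
    also have "tcat X le v2 (tcat X le v1 f) = W"
      unfolding W_def by (rule tcat_assoc[OF pos p2(2) p1(2) m(1), symmetric]) (use p2 gg p1 in auto)
    also have "tcat X le (tcat X le W u1) u2 = tcat X le W (tcat X le u1 u2)"
      by (rule tcat_assoc[OF pos W(1) p1(1) p2(1)]) (use W p1 p2 gg in auto)
    finally have hh: "h = tcat X le (tcat X le (tcat X le v2 v1) f) (tcat X le u1 u2)" unfolding W_def .
    have "fac X le f h = (tcat X le u1 u2, tcat X le v2 v1)"
      unfolding hh by (rule fac_unique[OF pos m(1) uu(1) vv(1)]) (use uu vv p1 in auto)
    then show ?thesis
      unfolding xfg yfg Fa_def using f1 f2 by simp
  qed
  show ?thesis
    unfolding cat_iso_def poset_cat_simps fact_cat_simps trace_cat_simps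
    apply (rule exI[where x=id], rule exI[where x=Fa])
    using bij domcod idf compf apply (simp add: case_prod_beta)
    apply (intro conjI allI impI)
    subgoal for a b using domcod[of "(a, b)"] by (simp add: case_prod_beta)
    subgoal for a b c using compf[of "(a, b)" "(b, c)"] by (simp add: case_prod_beta)
    done
qed

end
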